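(* In the category $\mathbf{Pos}$ of posets, any retract (in the arrow category) of a Dwyer map is a Dwyer map.
   Context: Posets are regarded as categories with a morphism $x\to y$ iff $x\le y$. A full subposet $S\subseteq C$ is a sieve if $c\le s$ with $s\in S$ implies $c\in S$, and a cosieve if $s\le c$ with $s\in S$ implies $c\in S$. A map $k\colon S\to C$ of posets is a Dwyer map if $k$ is the inclusion of a sieve and factors as $S\xrightarrow{i}T\xrightarrow{j}C$, where $j$ is the inclusion of a cosieve and $i$ is an inclusion having a right adjoint $r\colon T\to S$ (i.e. $i(s)\le t\iff s\le r(t)$) with $r\circ i=\mathrm{id}_S$. *)

theory Defs
  imports Main
begin

definition is_poset :: "'a set \<Rightarrow> ('a \<Rightarrow> 'a \<Rightarrow> bool) \<Rightarrow> bool" where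
  "is_poset X le \<longleftrightarrow>
     (\<forall>x\<in>X. le x x) \<and>
     (\<forall>x\<in>X. \<forall>y\<in>X. le x y \<and> le y x \<longrightarrow> x = y) \<and>
     (\<forall>x\<in>X. \<forall>y\<in>X. \<forall>z\<in>X. le x y \<and> le y z \<longrightarrow> le x z)"

definition poset_map :: "'a set \<Rightarrow> ('a \<Rightarrow> 'a \<Rightarrow> bool) \<Rightarrow> 'b set \<Rightarrow> ('b \<Rightarrow> 'b \<Rightarrow> bool)
    \<Rightarrow> ('a \<Rightarrow> 'b) \<Rightarrow> bool" where
  "poset_map X leX Y leY f \<longleftrightarrow>
     (\<forall>x\<in>X. f x \<in> Y) \<and> (\<forall>x\<in>X. \<forall>y\<in>X. leX x y \<longrightarrow> leY (f x) (f y))"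

definition sieve :: "'a set \<Rightarrow> ('a \<Rightarrow> 'a \<Rightarrow> bool) \<Rightarrow> 'a set \<Rightarrow> bool" where
  "sieve C le S \<longleftrightarrow> S \<subseteq> C \<and> (\<forall>c\<in>C. \<forall>s\<in>S. le c s \<longrightarrow> c \<in> S)"

definition cosieve :: "'a set \<Rightarrow> ('a \<Rightarrow> 'a \<Rightarrow> bool) \<Rightarrow> 'a set \<Rightarrow> bool" where
  "cosieve C le S \<longleftrightarrow> S \<subseteq> C \<and> (\<forall>c\<in>C. \<forall>s\<in>S. le s c \<longrightarrow> c \<in> S)"

definition full_embedding :: "'a set \<Rightarrow> ('a \<Rightarrow> 'a \<Rightarrow> bool) \<Rightarrow> 'b set \<Rightarrow> ('b \<Rightarrow> 'b \<Rightarrow> bool)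
    \<Rightarrow> ('a \<Rightarrow> 'b) \<Rightarrow> bool" where
  "full_embedding X leX Y leY f \<longleftrightarrow>
     (\<forall>x\<in>X. f x \<in> Y) \<and> (\<forall>x\<in>X. \<forall>y\<in>X. leX x y \<longleftrightarrow> leY (f x) (f y))"

text \<open>Dwyer map k : S \<rightarrow> C.  k is the inclusion of a sieve, and k factors as
  S --i--> T --j--> C with j the inclusion of a cosieve (T is taken to be a cosieve
  of C with the induced order) and i an inclusion with a right adjoint r, r \<circ> i = id.\<close>
definition dwyer_map :: "'a set \<Rightarrow> ('a \<Rightarrow> 'a \<Rightarrow> bool) \<Rightarrow> 'b set \<Rightarrow> ('b \<Rightarrow> 'b \<Rightarrow> bool)
    \<Rightarrow> ('a \<Rightarrow> 'b) \<Rightarrow> bool" where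
  "dwyer_map S leS C leC k \<longleftrightarrow>
     full_embedding S leS C leC k \<and> sieve C leC (k ` S) \<and>
     (\<exists>T r. cosieve C leC T \<and> k ` S \<subseteq> T \<and>
        poset_map T leC S leS r \<and>
        (\<forall>s\<in>S. \<forall>t\<in>T. leC (k s) t \<longleftrightarrow> leS s (r t)) \<and>
        (\<forall>s\<in>S. r (k s) = s))"

definition arrow_retract ::
  "'c set \<Rightarrow> ('c \<Rightarrow> 'c \<Rightarrow> bool) \<Rightarrow> 'd set \<Rightarrow> ('d \<Rightarrow> 'd \<Rightarrow> bool) \<Rightarrow> ('c \<Rightarrow> 'd) \<Rightarrow>
   'a set \<Rightarrow> ('a \<Rightarrow> 'a \<Rightarrow> bool) \<Rightarrow> 'b set \<Rightarrow> ('b \<Rightarrow> 'b \<Rightarrow> bool) \<Rightarrow> ('a \<Rightarrow> 'b) \<Rightarrow> bool" where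
  "arrow_retract S' leS' C' leC' k' S leS C leC k \<longleftrightarrow>
     (\<exists>a b c d.
        poset_map S' leS' S leS a \<and> poset_map S leS S' leS' b \<and>
        poset_map C' leC' C leC c \<and> poset_map C leC C' leC' d \<and>
        (\<forall>x\<in>S'. b (a x) = x) \<and> (\<forall>y\<in>C'. d (c y) = y) \<and>
        (\<forall>x\<in>S'. k (a x) = c (k' x)) \<and> (\<forall>x\<in>S. k' (b x) = d (k x)))"

end

theory Submission
  imports Defs
begin

theorem lemma3p10:
  fixes S :: "'a set" and leS :: "'a \<Rightarrow> 'a \<Rightarrow> bool"
    and C :: "'b set" and leC :: "'b \<Rightarrow> 'b \<Rightarrow> bool"
    and S' :: "'c set" and leS' :: "'c \<Rightarrow> 'c \<Rightarrow> bool"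
    and C' :: "'d set" and leC' :: "'d \<Rightarrow> 'd \<Rightarrow> bool"
    and k :: "'a \<Rightarrow> 'b" and k' :: "'c \<Rightarrow> 'd"
  assumes "is_poset S leS" and "is_poset C leC"
    and "is_poset S' leS'" and "is_poset C' leC'"
    and "poset_map S leS C leC k" and "poset_map S' leS' C' leC' k'"
    and "dwyer_map S leS C leC k"
    and "arrow_retract S' leS' C' leC' k' S leS C leC k"
  shows "dwyer_map S' leS' C' leC' k'"
proof -
  obtain a b c d where
    a: "poset_map S' leS' S leS a" and b: "poset_map S leS S' leS' b" and
    c: "poset_map C' leC' C leC c" and d: "poset_map C leC C' leC' d" and
    ba: "\<forall>x\<in>S'. b (a x) = x" and dc: "\<forall>y\<in>C'. d (c y) = y" and
    ka: "\<forall>x\<in>S'. k (a x) = c (k' x)" and kb: "\<forall>x\<in>S. k' (b x) = d (k x)"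
    using assms(8) unfolding arrow_retract_def by blast
  have fe: "full_embedding S leS C leC k" and sv: "sieve C leC (k ` S)"
    using assms(7) unfolding dwyer_map_def by auto
  obtain T r where T: "cosieve C leC T" and kT: "k ` S \<subseteq> T" and
    r: "poset_map T leC S leS r" and
    adj: "\<forall>s\<in>S. \<forall>t\<in>T. leC (k s) t \<longleftrightarrow> leS s (r t)" and
    rk: "\<forall>s\<in>S. r (k s) = s"
    using assms(7) unfolding dwyer_map_def by blast
  note pm = poset_map_def
  have aS: "\<And>x. x \<in> S' \<Longrightarrow> a x \<in> S" using a by (auto simp: pm)
  have bS: "\<And>x. x \<in> S \<Longrightarrow> b x \<in> S'" using b by (auto simp: pm)
  have cC: "\<And>x. x \<in> C' \<Longrightarrow> c x \<in> C" using c by (auto simp: pm)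
  have dC: "\<And>x. x \<in> C \<Longrightarrow> d x \<in> C'" using d by (auto simp: pm)
  have k'C: "\<And>x. x \<in> S' \<Longrightarrow> k' x \<in> C'" using assms(6) by (auto simp: pm)
  have kC: "\<And>x. x \<in> S \<Longrightarrow> k x \<in> C" using assms(5) by (auto simp: pm)
  have rS: "\<And>x. x \<in> T \<Longrightarrow> r x \<in> S" using r by (auto simp: pm)
  have TC: "T \<subseteq> C" using T by (auto simp: cosieve_def)
  have fe': "full_embedding S' leS' C' leC' k'"
    unfolding full_embedding_def
  proof (intro conjI ballI)
    fix x y assume x: "x \<in> S'" and y: "y \<in> S'"
    show "leS' x y = leC' (k' x) (k' y)"
    proof
      assume "leS' x y" thus "leC' (k' x) (k' y)" using assms(6) x y by (auto simp: pm)
    next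
      assume "leC' (k' x) (k' y)"
      hence "leC (c (k' x)) (c (k' y))" using c x y k'C by (auto simp: pm)
      hence "leC (k (a x)) (k (a y))" using ka x y by simp
      hence "leS (a x) (a y)" using fe aS x y by (auto simp: full_embedding_def)
      hence "leS' (b (a x)) (b (a y))" using b aS x y by (auto simp: pm)
      thus "leS' x y" using ba x y by simp
    qed
  qed (rule k'C)
  have sv': "sieve C' leC' (k' ` S')"
    unfolding sieve_def
  proof (intro conjI ballI impI)
    show "k' ` S' \<subseteq> C'" using k'C by auto
  next
    fix y s assume y: "y \<in> C'" and s: "s \<in> k' ` S'" and le: "leC' y s"
    then obtain x where x: "x \<in> S'" and sx: "s = k' x" by auto
    have "leC (c y) (c (k' x))" using c y x k'C le sx by (auto simp: pm)
    hence "leC (c y) (k (a x))" using ka x by simp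
    moreover have "k (a x) \<in> k ` S" using aS x by auto
    ultimately have "c y \<in> k ` S" using sv cC[OF y] aS[OF x] unfolding sieve_def by blast
    then obtain t where t: "t \<in> S" and ct: "c y = k t" by auto
    have "y = d (k t)" using dc y ct by metis
    also have "\<dots> = k' (b t)" using kb t by simp
    finally show "y \<in> k' ` S'" using bS t by auto
  qed
  define T' where "T' = {y \<in> C'. c y \<in> T}"
  define r' where "r' = (\<lambda>y. b (r (c y)))"
  have T': "cosieve C' leC' T'"
    unfolding cosieve_def
  proof (intro conjI ballI impI)
    show "T' \<subseteq> C'" by (auto simp: T'_def)
  next
    fix z y assume z: "z \<in> C'" and y: "y \<in> T'" and le: "leC' y z"
    have "leC (c y) (c z)" using c y z le by (auto simp: pm T'_def)
    hence "c z \<in> T" using T y cC z by (auto simp: cosieve_def T'_def)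
    thus "z \<in> T'" using z by (auto simp: T'_def)
  qed
  have kT': "k' ` S' \<subseteq> T'"
  proof
    fix y assume "y \<in> k' ` S'"
    then obtain x where x: "x \<in> S'" and "y = k' x" by auto
    thus "y \<in> T'" using ka kT aS k'C by (auto simp: T'_def) (metis image_subset_iff)
  qed
  have r': "poset_map T' leC' S' leS' r'"
    unfolding pm
  proof (intro conjI ballI impI)
    fix x assume "x \<in> T'" thus "r' x \<in> S'" using bS rS by (auto simp: T'_def r'_def)
  next
    fix x y assume x: "x \<in> T'" and y: "y \<in> T'" and le: "leC' x y"
    have "leC (c x) (c y)" using c x y le by (auto simp: pm T'_def)
    hence "leS (r (c x)) (r (c y))" using r x y by (auto simp: pm T'_def)
    thus "leS' (r' x) (r' y)" using b rS x y by (auto simp: pm T'_def r'_def)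
  qed
  have adj': "\<forall>s\<in>S'. \<forall>t\<in>T'. leC' (k' s) t \<longleftrightarrow> leS' s (r' t)"
  proof (intro ballI iffI)
    fix s t assume s: "s \<in> S'" and t: "t \<in> T'" and le: "leC' (k' s) t"
    have tC: "t \<in> C'" "c t \<in> T" using t by (auto simp: T'_def)
    have "leC (c (k' s)) (c t)" using c le s tC k'C by (auto simp: pm)
    hence "leC (k (a s)) (c t)" using ka s by simp
    hence "leS (a s) (r (c t))" using adj aS s tC by auto
    hence "leS' (b (a s)) (b (r (c t)))" using b aS rS s tC by (auto simp: pm)
    thus "leS' s (r' t)" using ba s by (simp add: r'_def)
  next
    fix s t assume s: "s \<in> S'" and t: "t \<in> T'" and le: "leS' s (r' t)"
    have tC: "t \<in> C'" "c t \<in> T" using t by (auto simp: T'_def)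
    have rct: "r (c t) \<in> S" using rS tC by auto
    have "leC' (k' s) (k' (r' t))" using assms(6) le s rct bS by (auto simp: pm r'_def)
    hence 1: "leC' (k' s) (d (k (r (c t))))" using kb rct by (simp add: r'_def)
    have "leS (r (c t)) (r (c t))" using assms(1) rct by (auto simp: is_poset_def)
    hence "leC (k (r (c t))) (c t)" using adj rct tC by auto
    hence "leC' (d (k (r (c t)))) (d (c t))" using d kC rct tC TC by (auto simp: pm)
    hence 2: "leC' (d (k (r (c t)))) t" using dc tC by simp
    show "leC' (k' s) t" using assms(4) 1 2 k'C s dC kC rct tC
      unfolding is_poset_def by blast
  qed
  have rk': "\<forall>s\<in>S'. r' (k' s) = s"
    using ka rk aS ba unfolding r'_def by (metis)
  show ?thesis unfolding dwyer_map_def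
    using fe' sv' T' kT' r' adj' rk' by blast
qed

end
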